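(* Let $T:\mathrm{PSym}(3)\to\mathrm{Sym}(3)$ satisfy Axioms (A0.1), (A0.2), (A0.3), (A1) and (A3). Then there exists $c\in\mathbb R$ such that for all $\alpha>0$ $$T\big(\mathrm{diag}(\alpha,\alpha^{-1},1)\big)=c\,\log\mathrm{diag}(\alpha,\alpha^{-1},1)=c\,\mathrm{diag}(\ln\alpha,-\ln\alpha,0).$$
   Context: $\mathrm{Sym}(3)$: real symmetric $3\times3$ matrices; $\mathrm{PSym}(3)$: symmetric positive definite ones; $\mathbb 1$: identity; $\mathrm{O}(3)$: orthogonal group; $\log$ is the principal matrix logarithm $\mathrm{PSym}(3)\to\mathrm{Sym}(3)$; coaxial means commuting. Axiom (A0.1): $T$ continuous. Axiom (A0.2): $T(U)=0$ iff $U=\mathbb 1$. Axiom (A0.3): $T(Q^TUQ)=Q^TT(U)Q$ for all $Q\in\mathrm O(3)$. Axiom (A1): for every $\alpha>0$ there is $s\in\mathbb R$ such that for all $U\in\mathrm{PSym}(3)$: $U=\mathrm{diag}(\alpha,\alpha^{-1},1)$ if and only if $T(U)=\mathrm{diag}(s,-s,0)$. Axiom (A3): $T(U_1U_2)=T(U_1)+T(U_2)$ for all coaxial $U_1,U_2\in\mathrm{PSym}(3)$. *)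

theory Defs
  imports "HOL-Analysis.Analysis"
begin

type_synonym mat3 = "real^3^3"

definition Sym3 :: "mat3 set" where
  "Sym3 = {A. transpose A = A}"

definition PSym3 :: "mat3 set" where
  "PSym3 = {A. transpose A = A \<and> (\<forall>x::real^3. x \<noteq> 0 \<longrightarrow> x \<bullet> (A *v x) > 0)}"

definition diag3 :: "real \<Rightarrow> real \<Rightarrow> real \<Rightarrow> mat3" where
  "diag3 a b c = (\<chi> i j. if i = j then (vector [a, b, c] :: real^3) $ i else 0)"

end

theory Submission
  imports Defs
begin

lemma diag3_nth: "diag3 a b c $ i $ j = (if i = j then (if i = 1 then a else if i = 2 then b else c) else 0)"
  unfolding diag3_def using exhaust_3[of i] by (auto simp: vector_3)
lemma diag3_mult: "diag3 a b c ** diag3 a' b' c' = diag3 (a*a') (b*b') (c*c')"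
  by (simp add: vec_eq_iff matrix_matrix_mult_def sum_3 diag3_nth forall_3)
lemma diag3_lin: "diag3 a b c = a *\<^sub>R diag3 1 0 0 + b *\<^sub>R diag3 0 1 0 + c *\<^sub>R diag3 0 0 1"
  by (simp add: vec_eq_iff diag3_nth forall_3)
lemma diag3_scale: "c *\<^sub>R diag3 a b d = diag3 (c*a) (c*b) (c*d)"
  by (simp add: vec_eq_iff diag3_nth forall_3)
lemma diag3_PSym: "a > 0 \<Longrightarrow> b > 0 \<Longrightarrow> c > 0 \<Longrightarrow> diag3 a b c \<in> PSym3"
proof -
  assume h: "a > 0" "b > 0" "c > 0"
  have "transpose (diag3 a b c) = diag3 a b c"
    by (simp add: vec_eq_iff diag3_nth forall_3 transpose_def)
  moreover have "x \<bullet> (diag3 a b c *v x) > 0" if "x \<noteq> 0" for x :: "real^3"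
  proof -
    have e: "x \<bullet> (diag3 a b c *v x) = a * (x$1)^2 + b*(x$2)^2 + c*(x$3)^2"
      by (simp add: inner_vec_def matrix_vector_mult_def sum_3 diag3_nth power2_eq_square)
    have "x$1 \<noteq> 0 \<or> x$2 \<noteq> 0 \<or> x$3 \<noteq> 0" using that by (auto simp: vec_eq_iff forall_3)
    have p: "a * (x$1)^2 \<ge> 0" "b * (x$2)^2 \<ge> 0" "c * (x$3)^2 \<ge> 0" using h by auto
    have "a * (x$1)^2 > 0 \<or> b * (x$2)^2 > 0 \<or> c * (x$3)^2 > 0" using h \<open>x$1 \<noteq> 0 \<or> _\<close> by auto
    then show ?thesis unfolding e using p by linarith
  qed
  ultimately show ?thesis by (auto simp: PSym3_def)
qed

lemma cauchy_nat:
  fixes g :: "real \<Rightarrow> real"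
  assumes add: "\<And>x y. g (x + y) = g x + g y"
  shows "g (real n * x) = real n * g x"
proof (induction n)
  case 0
  have "g 0 = g 0 + g 0" using add[of 0 0] by simp
  then show ?case by simp
next
  case (Suc n)
  have "g (real (Suc n) * x) = g (real n * x + x)" by (simp add: algebra_simps)
  also have "\<dots> = real n * g x + g x" using add Suc by simp
  finally show ?case by (simp add: algebra_simps)
qed

lemma cauchy_int:
  fixes g :: "real \<Rightarrow> real"
  assumes add: "\<And>x y. g (x + y) = g x + g y"
  shows "g (of_int k * x) = of_int k * g x"
proof -
  have g0: "g 0 = 0" using add[of 0 0] by simp
  have neg: "g (- y) = - g y" for y using add[of y "-y"] g0 by simp
  show ?thesis
  proof (cases "k \<ge> 0")
    case True
    then have "k = int (nat k)" by simp
    then obtain n where "k = int n" by blast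
    then show ?thesis using cauchy_nat[OF add, of n x] by simp
  next
    case False
    then have "k = - int (nat (-k))" by simp
    then obtain n where "k = - int n" by blast
    then show ?thesis using cauchy_nat[OF add, of n x] neg[of "real n * x"] by simp
  qed
qed

lemma cauchy_cont:
  fixes g :: "real \<Rightarrow> real"
  assumes add: "\<And>x y. g (x + y) = g x + g y"
    and cont: "continuous_on UNIV g"
  shows "g x = g 1 * x"
proof -
  have rat: "g q = g 1 * q" if qR: "q \<in> \<rat>" for q
  proof -
    obtain m n where q: "q = of_int m / of_int n" and n: "n > 0"
      using qR by (cases rule: Rats_cases') auto
    have "of_int n * g q = g (of_int n * q)" using cauchy_int[OF add, of n q] by simp
    also have "of_int n * q = of_int m * 1" using q n by simp
    also have "g \<dots> = of_int m * g 1" by (rule cauchy_int[OF add, of m 1])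
    finally have h: "of_int n * g q = of_int m * g 1" .
    have nz: "(of_int n :: real) \<noteq> 0" using n by simp
    have "g q = of_int m * g 1 / of_int n" using h nz by (simp add: eq_divide_eq mult.commute)
    also have "\<dots> = g 1 * q" unfolding q by simp
    finally show ?thesis .
  qed
  have cl: "closed {x. g x = g 1 * x}"
    by (intro closed_Collect_eq cont continuous_intros)
  have sub: "\<rat> \<subseteq> {x. g x = g 1 * x}" using rat by blast
  have cs: "closure \<rat> \<subseteq> {x. g x = g 1 * x}"
    by (rule closure_minimal[OF sub cl])
  have xc: "x \<in> closure \<rat>" by (simp add: Rats_closure_real)
  have "x \<in> {x. g x = g 1 * x}" by (rule subsetD[OF cs xc])
  then show ?thesis by simp
qed

theorem mainTheorem5:
  fixes T :: "mat3 \<Rightarrow> mat3"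
  assumes maps: "\<forall>U\<in>PSym3. T U \<in> Sym3"
    and A01: "continuous_on PSym3 T"
    and A02: "\<forall>U\<in>PSym3. T U = 0 \<longleftrightarrow> U = mat 1"
    and A03: "\<forall>Q U. orthogonal_matrix Q \<and> U \<in> PSym3 \<longrightarrow>
                T (transpose Q ** U ** Q) = transpose Q ** T U ** Q"
    and A1: "\<forall>\<alpha>>0. \<exists>s::real. \<forall>U\<in>PSym3.
                U = diag3 \<alpha> (1/\<alpha>) 1 \<longleftrightarrow> T U = diag3 s (-s) 0"
    and A3: "\<forall>U1\<in>PSym3. \<forall>U2\<in>PSym3. U1 ** U2 = U2 ** U1 \<longrightarrow>
                T (U1 ** U2) = T U1 + T U2"
  shows "\<exists>c::real. \<forall>\<alpha>>0. T (diag3 \<alpha> (1/\<alpha>) 1) = c *\<^sub>R diag3 (ln \<alpha>) (- ln \<alpha>) 0"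
proof -
  define D where "D = (\<lambda>a::real. diag3 a (1/a) 1)"
  have DP: "D a \<in> PSym3" if "a > 0" for a using that diag3_PSym[of a "1/a" 1] by (simp add: D_def)
  have TD: "\<exists>s. T (D a) = diag3 s (-s) 0" if "a > 0" for a
    using A1 that DP[OF that] unfolding D_def by blast
  define f where "f a = T (D a) $ 1 $ 1" for a
  have TDf: "T (D a) = diag3 (f a) (- f a) 0" if apos: "a > 0" for a
  proof -
    obtain s where s: "T (D a) = diag3 s (-s) 0" using TD[OF apos] by blast
    then have "f a = s" by (simp add: f_def diag3_nth)
    then show ?thesis using s by simp
  qed
  have Dmul: "D (a*b) = D a ** D b" for a b by (simp add: D_def diag3_mult)
  have fadd: "f (a*b) = f a + f b" if "a > 0" "b > 0" for a b
  proof -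
    have "D a ** D b = D b ** D a" by (simp only: Dmul[symmetric] mult.commute)
    then have "T (D (a*b)) = T (D a) + T (D b)" using A3 DP that Dmul by simp
    then show ?thesis by (simp add: f_def)
  qed
  define g where "g x = f (exp x)" for x
  have gadd: "g (x + y) = g x + g y" for x y by (simp add: g_def exp_add fadd)
  have cD: "continuous_on UNIV (\<lambda>x. D (exp x))"
    unfolding D_def by (subst diag3_lin) (intro continuous_intros; simp)
  have "continuous_on UNIV (T \<circ> (\<lambda>x. D (exp x)))"
    by (rule continuous_on_compose[OF cD continuous_on_subset[OF A01]]) (auto intro: DP)
  then have gc: "continuous_on UNIV g"
    unfolding g_def f_def o_def by (intro continuous_intros)
  show ?thesis
  proof (intro exI allI impI)
    fix a :: real assume a: "a > 0"
    have "f a = g (ln a)" using a by (simp add: g_def)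
    also have "\<dots> = g 1 * ln a" by (rule cauchy_cont[OF gadd gc])
    finally have fa: "f a = g 1 * ln a" .
    have "T (diag3 a (1/a) 1) = T (D a)" by (simp only: D_def)
    also have "\<dots> = diag3 (f a) (- f a) 0" by (rule TDf[OF a])
    also have "\<dots> = g 1 *\<^sub>R diag3 (ln a) (- ln a) 0" unfolding fa diag3_scale by simp
    finally show "T (diag3 a (1/a) 1) = g 1 *\<^sub>R diag3 (ln a) (- ln a) 0" .
  qed
qed

end
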